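(* Let $n\ge 1$. Let $X^\theta=(X^\theta_1,\dots,X^\theta_n)$ be $n$ independent random variables in $S_0$, identically distributed according to a Borel probability measure $\nu_0$ on $S_0$, and let $X^a=(X^a_1,\dots,X^a_n)$ be $n$ independent random variables in $\mathbb C^+$, identically distributed according to a Borel probability measure $\nu_1$ on $\mathbb C^+$, with $X^\theta$ independent of $X^a$. Set $X=(X^\theta,X^a)$ and let $X'=((X^\theta)',(X^a)')$ be an independent copy of $X$. For $A\subseteq[n]=\{1,\dots,n\}$ and $\alpha\in\{\theta,a\}$ define $X^{\alpha,A}$ by $X^{\alpha,A}_i=(X^\alpha_i)'$ if $i\in A$ and $X^{\alpha,A}_i=X^\alpha_i$ if $i\notin A$; write $X^{\alpha,j}=X^{\alpha,\{j\}}$. Define $X^{A_\theta,*}=(X^{\theta,A},X^a)$ and $X^{A_a,*}=((X^\theta)',X^{a,A})$. Let $h,f:S^n\to\mathbb C$ be measurable functions (where $S=S_0\times\mathbb C^+$ and a point of $S^n$ is identified with a pair $(x^\theta,x^a)\in S_0^n\times(\mathbb C^+)^n$) such that $h(X)$ and $f(X)$ are square integrable. For $j\in[n]$ and a point $Y=(Y^\theta,Y^a)$ (built from the coordinates of $X$ and $X'$) define $$\Delta^\theta_j f(Y)=f(Y^\theta,Y^a)-f(Y^{\theta,j},Y^a),\qquad \Delta^a_j f(Y)=f(Y^\theta,Y^a)-f(Y^\theta,Y^{a,j}),$$ where $Y^{\alpha,j}$ denotes $Y^\alpha$ with its $j$-th component replaced by $(X^\alpha_j)'$. Then, with $\mathrm{Cov}(U,V)=\mathbb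 E\{UV\}-\mathbb E\{U\}\mathbb E\{V\}$ and $\binom{n}{p}$ the binomial coefficient, $$\mathrm{Cov}(h(X),f(X))=\frac12\sum_{\alpha\in\{\theta,a\}}\ \sum_{A\subsetneq[n]}\frac{1}{\binom{n}{|A|}\,(n-|A|)}\sum_{j\notin A}\mathbb E\big\{\Delta^\alpha_j h(X)\,\Delta^\alpha_j f(X^{A_\alpha,*})\big\},$$ where the sum over $A$ includes the empty set.
   Context: Fix $0<\xi<1/2$ and let $Z=(0,1)^3$. Define $S_0=\{(\theta,\rho)\in Z\times[0,1/2]:\ \mathrm{dist}(\theta,\partial Z)>\rho+\xi\}$ and $\mathbb C^+$ the set of complex numbers with strictly positive imaginary part. Note that in $\Delta^\alpha_j f(X^{A_\alpha,*})$ the $j$-th $\alpha$-component of $X^{A_\alpha,*}$ (with $j\notin A$) is replaced by the corresponding component of the independent copy $X'$; e.g. $\Delta^a_j f(X^{A_a,*})=f((X^\theta)',X^{a,A})-f((X^\theta)',X^{a,A\cup\{j\}})$ and $\Delta^\theta_j f(X^{A_\theta,*})=f(X^{\theta,A},X^a)-f(X^{\theta,A\cup\{j\}},X^a)$. *)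

theory Defs
  imports "HOL-Probability.Probability"
begin

definition Zcube :: "(real^3) set" where
  "Zcube = {x. \<forall>i. 0 < x$i \<and> x$i < 1}"

definition S0 :: "real \<Rightarrow> ((real^3) \<times> real) set" where
  "S0 \<xi> = {(\<theta>, \<rho>). \<theta> \<in> Zcube \<and> 0 \<le> \<rho> \<and> \<rho> \<le> 1/2 \<and> infdist \<theta> (frontier Zcube) > \<rho> + \<xi>}"

definition Cplus :: "complex set" where
  "Cplus = {z. Im z > 0}"

definition repl :: "nat set \<Rightarrow> (nat \<Rightarrow> 'b) \<Rightarrow> (nat \<Rightarrow> 'b) \<Rightarrow> nat \<Rightarrow> 'b" where
  "repl A x x' = (\<lambda>i. if i \<in> A then x' i else x i)"

text \<open>Measurable space structure on S^n = S_0^n x (C^+)^n (ambient Borel structure), indices 1..n.\<close>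
definition SnM :: "nat \<Rightarrow> ((nat \<Rightarrow> (real^3) \<times> real) \<times> (nat \<Rightarrow> complex)) measure" where
  "SnM n = PiM {1..n} (\<lambda>_. borel) \<Otimes>\<^sub>M PiM {1..n} (\<lambda>_. borel)"

end

theory Submission
  imports Defs
begin


definition sd :: "nat set \<Rightarrow> nat set \<Rightarrow> nat set" where
  "sd X Y = (X - Y) \<union> (Y - X)"

definition swp :: "nat set \<Rightarrow> nat set \<Rightarrow> ((nat \<Rightarrow> 'a) \<times> (nat \<Rightarrow> 'b)) \<times> ((nat \<Rightarrow> 'a) \<times> (nat \<Rightarrow> 'b))
   \<Rightarrow> ((nat \<Rightarrow> 'a) \<times> (nat \<Rightarrow> 'b)) \<times> ((nat \<Rightarrow> 'a) \<times> (nat \<Rightarrow> 'b))" where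
  "swp S T w = ((repl S (fst (fst w)) (fst (snd w)), repl T (snd (fst w)) (snd (snd w))),
                (repl S (fst (snd w)) (fst (fst w)), repl T (snd (snd w)) (snd (fst w))))"

definition cfg :: "nat set \<Rightarrow> nat set \<Rightarrow> ((nat \<Rightarrow> 'a) \<times> (nat \<Rightarrow> 'b)) \<times> ((nat \<Rightarrow> 'a) \<times> (nat \<Rightarrow> 'b))
   \<Rightarrow> ((nat \<Rightarrow> 'a) \<times> (nat \<Rightarrow> 'b))" where
  "cfg S T w = (repl S (fst (fst w)) (fst (snd w)), repl T (snd (fst w)) (snd (snd w)))"

lemma cfg_swp: "cfg S T (swp U V w) = cfg (sd S U) (sd T V) w"
  by (auto simp: cfg_def swp_def repl_def sd_def fun_eq_iff)

lemma fst_swp: "fst (swp S T w) = cfg S T w"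
  by (simp add: swp_def cfg_def)

lemma measurable_repl:
  assumes "f \<in> measurable N (PiM I M')" "g \<in> measurable N (PiM I M')" "S \<subseteq> I"
  shows "(\<lambda>w. repl S (f w) (g w)) \<in> measurable N (PiM I M')"
  unfolding repl_def
proof (rule measurable_PiM_single')
  fix i assume "i \<in> I"
  then show "(\<lambda>w. if i \<in> S then g w i else f w i) \<in> measurable N (M' i)"
    using assms by (cases "i \<in> S") (auto intro: measurable_compose[OF _ measurable_component_singleton])
next
  show "(\<lambda>w i. if i \<in> S then g w i else f w i) \<in> space N \<rightarrow> (\<Pi>\<^sub>E i\<in>I. space (M' i))"
    using assms measurable_space[OF assms(1)] measurable_space[OF assms(2)]
    by (auto simp: space_PiM PiE_iff extensional_def subset_iff)
qed

lemma Int_stable_times: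
  assumes "Int_stable A" "Int_stable B"
  shows "Int_stable {a \<times> b | a b. a \<in> A \<and> b \<in> B}"
  unfolding Int_stable_def
proof (intro ballI)
  fix x y assume "x \<in> {a \<times> b | a b. a \<in> A \<and> b \<in> B}" "y \<in> {a \<times> b | a b. a \<in> A \<and> b \<in> B}"
  then obtain a b c d where x: "x = a \<times> b" "a \<in> A" "b \<in> B" and y: "y = c \<times> d" "c \<in> A" "d \<in> B"
    by blast
  have "a \<inter> c \<in> A" "b \<inter> d \<in> B" using assms x y by (auto simp: Int_stable_def)
  moreover have "x \<inter> y = (a \<inter> c) \<times> (b \<inter> d)" using x y by (simp add: Times_Int_Times)
  ultimately show "x \<inter> y \<in> {a \<times> b | a b. a \<in> A \<and> b \<in> B}" by blast
qed

locale covctx =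
  fixes M0 :: "'a measure" and M1 :: "'b measure" and I :: "nat set"
  assumes M0: "prob_space M0" and M1: "prob_space M1" and fin: "finite I"
begin

definition "P = PiM I (\<lambda>_. M0)"
definition "Q = PiM I (\<lambda>_. M1)"
definition "PQ = P \<Otimes>\<^sub>M Q"
definition "Om = PQ \<Otimes>\<^sub>M PQ"

lemma probP: "prob_space P" unfolding P_def by (intro prob_space_PiM M0)
lemma probQ: "prob_space Q" unfolding Q_def by (intro prob_space_PiM M1)
lemma probPQ: "prob_space PQ" unfolding PQ_def by (intro prob_space_pair probP probQ)
lemma probOm: "prob_space Om" unfolding Om_def by (intro prob_space_pair probPQ)

lemma meas_swp:
  assumes "S \<subseteq> I" "T \<subseteq> I"
  shows "swp S T \<in> measurable Om Om"
proof -
  have "swp S T \<in> measurable ((P \<Otimes>\<^sub>M Q) \<Otimes>\<^sub>M (P \<Otimes>\<^sub>M Q)) ((P \<Otimes>\<^sub>M Q) \<Otimes>\<^sub>M (P \<Otimes>\<^sub>M Q))"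
    unfolding swp_def P_def Q_def
    by (intro measurable_Pair measurable_repl assms; measurable)
  then show ?thesis unfolding Om_def PQ_def .
qed

lemma meas_cfg:
  assumes "S \<subseteq> I" "T \<subseteq> I"
  shows "cfg S T \<in> measurable Om PQ"
proof -
  have "(\<lambda>w. fst (swp S T w)) \<in> measurable Om PQ"
    by (rule measurable_compose[OF meas_swp[OF assms]]) (simp add: Om_def)
  then show ?thesis by (simp add: fst_swp)
qed

lemma sfP: "sigma_finite_measure P" by (rule prob_space_imp_sigma_finite[OF probP])
lemma sfQ: "sigma_finite_measure Q" by (rule prob_space_imp_sigma_finite[OF probQ])
lemma sfPQ: "sigma_finite_measure PQ" by (rule prob_space_imp_sigma_finite[OF probPQ])

lemma emP: "(\<And>i. i \<in> I \<Longrightarrow> F i \<in> sets M0) \<Longrightarrow> emeasure P (PiE I F) = (\<Prod>i\<in>I. emeasure M0 (F i))"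
  unfolding P_def
  by (rule product_sigma_finite.emeasure_PiM[OF product_sigma_finite.intro fin])
     (auto intro: prob_space_imp_sigma_finite M0)

lemma emQ: "(\<And>i. i \<in> I \<Longrightarrow> F i \<in> sets M1) \<Longrightarrow> emeasure Q (PiE I F) = (\<Prod>i\<in>I. emeasure M1 (F i))"
  unfolding Q_def
  by (rule product_sigma_finite.emeasure_PiM[OF product_sigma_finite.intro fin])
     (auto intro: prob_space_imp_sigma_finite M1)

lemma setsPi0: "(\<And>i. i \<in> I \<Longrightarrow> F i \<in> sets M0) \<Longrightarrow> PiE I F \<in> sets P"
  unfolding P_def by (rule sets_PiM_I_finite[OF fin])
lemma setsPi1: "(\<And>i. i \<in> I \<Longrightarrow> F i \<in> sets M1) \<Longrightarrow> PiE I F \<in> sets Q"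
  unfolding Q_def by (rule sets_PiM_I_finite[OF fin])

lemma emOm_box:
  assumes "\<And>i. i \<in> I \<Longrightarrow> F1 i \<in> sets M0" "\<And>i. i \<in> I \<Longrightarrow> F2 i \<in> sets M1"
    "\<And>i. i \<in> I \<Longrightarrow> F3 i \<in> sets M0" "\<And>i. i \<in> I \<Longrightarrow> F4 i \<in> sets M1"
  shows "emeasure Om ((PiE I F1 \<times> PiE I F2) \<times> (PiE I F3 \<times> PiE I F4)) =
    ((\<Prod>i\<in>I. emeasure M0 (F1 i)) * (\<Prod>i\<in>I. emeasure M1 (F2 i))) *
    ((\<Prod>i\<in>I. emeasure M0 (F3 i)) * (\<Prod>i\<in>I. emeasure M1 (F4 i)))"
proof -
  have PQ: "emeasure PQ (PiE I A \<times> PiE I B) = (\<Prod>i\<in>I. emeasure M0 (A i)) * (\<Prod>i\<in>I. emeasure M1 (B i))"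
    if "\<And>i. i \<in> I \<Longrightarrow> A i \<in> sets M0" "\<And>i. i \<in> I \<Longrightarrow> B i \<in> sets M1" for A B
    unfolding PQ_def
    using that by (simp add: sigma_finite_measure.emeasure_pair_measure_Times[OF sfQ] setsPi0 setsPi1 emP emQ)
  have "emeasure Om ((PiE I F1 \<times> PiE I F2) \<times> (PiE I F3 \<times> PiE I F4)) =
     emeasure PQ (PiE I F1 \<times> PiE I F2) * emeasure PQ (PiE I F3 \<times> PiE I F4)"
    unfolding Om_def
    by (rule sigma_finite_measure.emeasure_pair_measure_Times[OF sfPQ])
       (auto simp: PQ_def intro!: pair_measureI setsPi0 setsPi1 assms)
  then show ?thesis using PQ assms by simp
qed

lemma repl_PiE:
  assumes "t \<in> extensional I" "t' \<in> extensional I" "S \<subseteq> I"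
  shows "repl S t t' \<in> PiE I F \<longleftrightarrow> (\<forall>i\<in>I. (if i \<in> S then t' i else t i) \<in> F i)"
  using assms by (auto simp: repl_def PiE_iff extensional_def)

lemma spOm: "space Om = (PiE I (\<lambda>_. space M0) \<times> PiE I (\<lambda>_. space M1)) \<times> (PiE I (\<lambda>_. space M0) \<times> PiE I (\<lambda>_. space M1))"
  by (simp add: Om_def PQ_def P_def Q_def space_pair_measure space_PiM)

lemma swp_inv:
  assumes ST: "S \<subseteq> I" "T \<subseteq> I"
  shows "distr Om Om (swp S T) = Om"
proof -
  let ?EP = "prod_algebra I (\<lambda>_. M0)"
  let ?EQ = "prod_algebra I (\<lambda>_. M1)"
  define EPQ where "EPQ = {a \<times> b | a b. a \<in> ?EP \<and> b \<in> ?EQ}"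
  define E where "E = {a \<times> b | a b. a \<in> EPQ \<and> b \<in> EPQ}"
  have spP: "space P = (\<Pi>\<^sub>E i\<in>I. space M0)" unfolding P_def space_PiM ..
  have spQ: "space Q = (\<Pi>\<^sub>E i\<in>I. space M1)" unfolding Q_def space_PiM ..
  have EPsub: "?EP \<subseteq> Pow (space P)" unfolding spP by (rule prod_algebra_sets_into_space)
  have EQsub: "?EQ \<subseteq> Pow (space Q)" unfolding spQ by (rule prod_algebra_sets_into_space)
  have setsP: "sets P = sigma_sets (space P) ?EP" unfolding P_def space_PiM by (rule sets_PiM)
  have setsQ: "sets Q = sigma_sets (space Q) ?EQ" unfolding Q_def space_PiM by (rule sets_PiM)
  have topP: "space P \<in> ?EP" unfolding spP by (rule space_in_prod_algebra)
  have topQ: "space Q \<in> ?EQ" unfolding spQ by (rule space_in_prod_algebra)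
  have spPQ: "space PQ = space P \<times> space Q" by (simp add: PQ_def space_pair_measure)
  have EPQsub: "EPQ \<subseteq> Pow (space PQ)" using EPsub EQsub by (auto simp: EPQ_def spPQ)
  have topPQ: "space PQ \<in> EPQ" using topP topQ by (auto simp: EPQ_def spPQ)
  have setsPQ: "sets PQ = sigma_sets (space PQ) EPQ"
  proof -
    have "sets PQ = sets (sigma (space P \<times> space Q) EPQ)" unfolding PQ_def EPQ_def
      by (rule sets_pair_eq[where Ca="{space P}" and Cb="{space Q}"])
         (use EPsub EQsub setsP setsQ topP topQ in auto)
    also have "\<dots> = sigma_sets (space P \<times> space Q) EPQ"
      by (rule sets_measure_of) (use EPQsub spPQ in auto)
    finally show ?thesis by (simp add: spPQ)
  qed
  have spOm': "space Om = space PQ \<times> space PQ" by (simp add: Om_def space_pair_measure)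
  have Esub: "E \<subseteq> Pow (space Om)" using EPQsub by (auto simp: E_def spOm')
  have topOm: "space Om \<in> E" using topPQ by (auto simp: E_def spOm')
  have setsOm: "sets Om = sigma_sets (space Om) E"
  proof -
    have "sets Om = sets (sigma (space PQ \<times> space PQ) E)" unfolding Om_def E_def
      by (rule sets_pair_eq[where Ca="{space PQ}" and Cb="{space PQ}"])
         (use EPQsub setsPQ topPQ in auto)
    also have "\<dots> = sigma_sets (space PQ \<times> space PQ) E"
      by (rule sets_measure_of) (use Esub spOm' in auto)
    finally show ?thesis by (simp add: spOm')
  qed
  have IS: "Int_stable E" unfolding E_def EPQ_def
    by (intro Int_stable_times Int_stable_prod_algebra)
  have "Om = distr Om Om (swp S T)"
  proof (rule measure_eqI_generator_eq[where E=E and \<Omega>="space Om" and A="\<lambda>_. space Om", OF IS Esub])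
    show "sets Om = sigma_sets (space Om) E" by (rule setsOm)
    show "sets (distr Om Om (swp S T)) = sigma_sets (space Om) E" by (simp add: setsOm)
    show "range (\<lambda>_. space Om) \<subseteq> E" using topOm by auto
    show "(\<Union>i. space Om) = space Om" by simp
    show "emeasure Om (space Om) \<noteq> \<infinity>" for i::nat using prob_space.emeasure_space_1[OF probOm] by simp
  next
    fix X assume "X \<in> E"
    then obtain F1 F2 F3 F4 where X: "X = (PiE I F1 \<times> PiE I F2) \<times> (PiE I F3 \<times> PiE I F4)"
      and F1: "F1 \<in> (\<Pi> j\<in>I. sets M0)" and F2: "F2 \<in> (\<Pi> j\<in>I. sets M1)"
      and F3: "F3 \<in> (\<Pi> j\<in>I. sets M0)" and F4: "F4 \<in> (\<Pi> j\<in>I. sets M1)"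
      unfolding E_def EPQ_def prod_algebra_eq_finite[OF fin] by blast
    have XOm: "X \<in> sets Om" using \<open>X \<in> E\<close> setsOm by auto
    define G1 where "G1 i = (if i \<in> S then F3 i else F1 i)" for i
    define G3 where "G3 i = (if i \<in> S then F1 i else F3 i)" for i
    define G2 where "G2 i = (if i \<in> T then F4 i else F2 i)" for i
    define G4 where "G4 i = (if i \<in> T then F2 i else F4 i)" for i
    have sub: "\<forall>i\<in>I. F1 i \<subseteq> space M0 \<and> F3 i \<subseteq> space M0 \<and> F2 i \<subseteq> space M1 \<and> F4 i \<subseteq> space M1"
    proof
      fix i assume i: "i \<in> I"
      have "F1 i \<in> sets M0" "F3 i \<in> sets M0" "F2 i \<in> sets M1" "F4 i \<in> sets M1"
        using F1 F2 F3 F4 i by auto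
      then show "F1 i \<subseteq> space M0 \<and> F3 i \<subseteq> space M0 \<and> F2 i \<subseteq> space M1 \<and> F4 i \<subseteq> space M1"
        by (simp add: sets.sets_into_space)
    qed
    have pre: "swp S T -` X \<inter> space Om = (PiE I G1 \<times> PiE I G2) \<times> (PiE I G3 \<times> PiE I G4)"
    proof (rule set_eqI)
      fix w :: "((nat \<Rightarrow> 'a) \<times> (nat \<Rightarrow> 'b)) \<times> ((nat \<Rightarrow> 'a) \<times> (nat \<Rightarrow> 'b))"
      obtain t a t' a' where w: "w = ((t, a), (t', a'))" by (metis prod.collapse)
      show "w \<in> swp S T -` X \<inter> space Om \<longleftrightarrow> w \<in> (PiE I G1 \<times> PiE I G2) \<times> (PiE I G3 \<times> PiE I G4)"
      proof
        assume "w \<in> swp S T -` X \<inter> space Om"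
        then have sp: "t \<in> extensional I" "t' \<in> extensional I" "a \<in> extensional I" "a' \<in> extensional I"
          and in1: "repl S t t' \<in> PiE I F1" "repl S t' t \<in> PiE I F3"
          and in2: "repl T a a' \<in> PiE I F2" "repl T a' a \<in> PiE I F4"
          by (auto simp: w spOm swp_def X PiE_iff)
        show "w \<in> (PiE I G1 \<times> PiE I G2) \<times> (PiE I G3 \<times> PiE I G4)"
          using in1 in2 sp ST unfolding repl_PiE[OF sp(1,2) ST(1)] repl_PiE[OF sp(2,1) ST(1)]
            repl_PiE[OF sp(3,4) ST(2)] repl_PiE[OF sp(4,3) ST(2)]
          by (auto simp: w PiE_iff G1_def G2_def G3_def G4_def split: if_splits)
      next
        assume "w \<in> (PiE I G1 \<times> PiE I G2) \<times> (PiE I G3 \<times> PiE I G4)"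
        then have sp: "t \<in> extensional I" "t' \<in> extensional I" "a \<in> extensional I" "a' \<in> extensional I"
          and i1: "t \<in> PiE I G1" "t' \<in> PiE I G3" "a \<in> PiE I G2" "a' \<in> PiE I G4"
          by (auto simp: w PiE_iff)
        have "w \<in> space Om"
          using i1 sub by (auto simp: w spOm PiE_iff G1_def G2_def G3_def G4_def split: if_splits) (meson subsetD)+
        moreover have "swp S T w \<in> X"
          using i1 ST unfolding X swp_def w fst_conv snd_conv mem_Times_iff
            repl_PiE[OF sp(1,2) ST(1)] repl_PiE[OF sp(2,1) ST(1)]
            repl_PiE[OF sp(3,4) ST(2)] repl_PiE[OF sp(4,3) ST(2)]
          by (auto simp: PiE_iff G1_def G2_def G3_def G4_def split: if_splits)
        ultimately show "w \<in> swp S T -` X \<inter> space Om" by simp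
      qed
    qed
    have m0: "(\<Prod>i\<in>I. emeasure M0 (G1 i)) * (\<Prod>i\<in>I. emeasure M0 (G3 i)) =
        (\<Prod>i\<in>I. emeasure M0 (F1 i)) * (\<Prod>i\<in>I. emeasure M0 (F3 i))"
      unfolding prod.distrib[symmetric] G1_def G3_def by (intro prod.cong) (auto simp: mult.commute)
    have m1: "(\<Prod>i\<in>I. emeasure M1 (G2 i)) * (\<Prod>i\<in>I. emeasure M1 (G4 i)) =
        (\<Prod>i\<in>I. emeasure M1 (F2 i)) * (\<Prod>i\<in>I. emeasure M1 (F4 i))"
      unfolding prod.distrib[symmetric] G2_def G4_def by (intro prod.cong) (auto simp: mult.commute)
    have "emeasure (distr Om Om (swp S T)) X = emeasure Om (swp S T -` X \<inter> space Om)"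
      by (rule emeasure_distr[OF meas_swp[OF ST] XOm])
    also have "\<dots> = ((\<Prod>i\<in>I. emeasure M0 (G1 i)) * (\<Prod>i\<in>I. emeasure M1 (G2 i))) *
      ((\<Prod>i\<in>I. emeasure M0 (G3 i)) * (\<Prod>i\<in>I. emeasure M1 (G4 i)))"
      unfolding pre using F1 F2 F3 F4 by (intro emOm_box) (auto simp: G1_def G2_def G3_def G4_def)
    also have "\<dots> = ((\<Prod>i\<in>I. emeasure M0 (G1 i)) * (\<Prod>i\<in>I. emeasure M0 (G3 i))) *
      ((\<Prod>i\<in>I. emeasure M1 (G2 i)) * (\<Prod>i\<in>I. emeasure M1 (G4 i)))" by (simp add: ac_simps)
    also have "\<dots> = ((\<Prod>i\<in>I. emeasure M0 (F1 i)) * (\<Prod>i\<in>I. emeasure M0 (F3 i))) *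
      ((\<Prod>i\<in>I. emeasure M1 (F2 i)) * (\<Prod>i\<in>I. emeasure M1 (F4 i)))" by (simp only: m0 m1)
    also have "\<dots> = emeasure Om X"
      unfolding X using F1 F2 F3 F4 by (subst emOm_box) (auto simp: ac_simps)
    finally show "emeasure Om X = emeasure (distr Om Om (swp S T)) X" by simp
  qed
  then show ?thesis by simp
qed

end



lemma telescope:
  fixes g :: "nat set \<Rightarrow> complex"
  assumes fin: "finite I" and n: "card I = n"
  shows "(\<Sum>A\<in>{A. A \<subset> I}. 1 / (of_nat (n choose card A) * of_nat (n - card A)) *
            (\<Sum>j\<in>I - A. g A - g (insert j A))) = g {} - g I"
proof -
  define c where "c (B::nat set) = 1 / (of_nat (n choose card B) :: complex)" for B
  define w where "w (A::nat set) = 1 / (of_nat (n choose card A) * of_nat (n - card A) :: complex)" for A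
  have finP: "finite {A. A \<subset> I}" by (rule finite_subset[of _ "Pow I"]) (auto simp: fin)
  have finP2: "finite {B. B \<subseteq> I \<and> B \<noteq> {}}" by (rule finite_subset[of _ "Pow I"]) (auto simp: fin)
  have cardlt: "card A < n" if "A \<subset> I" for A using psubset_card_mono[OF fin that] n by simp
  have part1: "(\<Sum>A\<in>{A. A \<subset> I}. w A * (\<Sum>j\<in>I - A. g A)) = (\<Sum>A\<in>{A. A \<subset> I}. c A * g A)"
  proof (rule sum.cong[OF refl])
    fix A assume A: "A \<in> {A. A \<subset> I}"
    then have "card (I - A) = n - card A"
      using card_Diff_subset[of A I] fin n finite_subset[of A I] by auto
    moreover have "n - card A \<noteq> 0" using cardlt[of A] A by simp
    moreover have "(n choose card A) \<noteq> 0" using cardlt[of A] A by simp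
    ultimately show "w A * (\<Sum>j\<in>I - A. g A) = c A * g A"
      by (simp add: w_def c_def field_simps)
  qed
  have part2: "(\<Sum>A\<in>{A. A \<subset> I}. w A * (\<Sum>j\<in>I - A. g (insert j A))) = (\<Sum>B\<in>{B. B \<subseteq> I \<and> B \<noteq> {}}. c B * g B)"
  proof -
    have "(\<Sum>A\<in>{A. A \<subset> I}. w A * (\<Sum>j\<in>I - A. g (insert j A))) =
        (\<Sum>A\<in>{A. A \<subset> I}. \<Sum>j\<in>I - A. w A * g (insert j A))"
      by (simp add: sum_distrib_left)
    also have "\<dots> = (\<Sum>(A,j)\<in>Sigma {A. A \<subset> I} (\<lambda>A. I - A). w A * g (insert j A))"
      by (rule sum.Sigma) (use finP fin in auto)
    also have "\<dots> = (\<Sum>(B,j)\<in>Sigma {B. B \<subseteq> I \<and> B \<noteq> {}} (\<lambda>B. B). w (B - {j}) * g B)"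
      by (rule sum.reindex_bij_witness[where i="\<lambda>(B,j). (B - {j}, j)" and j="\<lambda>(A,j). (insert j A, j)"])
         auto
    also have "\<dots> = (\<Sum>B\<in>{B. B \<subseteq> I \<and> B \<noteq> {}}. \<Sum>j\<in>B. w (B - {j}) * g B)"
      by (rule sum.Sigma[symmetric]) (use finP2 fin in \<open>auto intro: finite_subset\<close>)
    also have "\<dots> = (\<Sum>B\<in>{B. B \<subseteq> I \<and> B \<noteq> {}}. c B * g B)"
    proof (rule sum.cong[OF refl])
      fix B assume B: "B \<in> {B. B \<subseteq> I \<and> B \<noteq> {}}"
      then have finB: "finite B" using fin finite_subset by blast
      obtain k where k: "card B = Suc k" using B finB by (cases "card B") auto
      have kn: "Suc k \<le> n" using card_mono[OF fin, of B] B k n by simp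
      have wj: "w (B - {j}) = 1 / (of_nat (n choose k) * of_nat (n - k))" if "j \<in> B" for j
        using that finB k by (simp add: w_def card_Diff_singleton)
      have "(\<Sum>j\<in>B. w (B - {j}) * g B) = (\<Sum>j\<in>B. 1 / (of_nat (n choose k) * of_nat (n - k)) * g B)"
        by (rule sum.cong) (simp_all add: wj)
      also have "\<dots> = of_nat (Suc k) * (1 / (of_nat (n choose k) * of_nat (n - k))) * g B"
        using k by simp
      also have "\<dots> = c B * g B"
      proof -
        have e: "(n - k) * (n choose k) = Suc k * (n choose Suc k)"
          using binomial_absorb_comp[of n k] binomial_absorption[of k n] by simp
        have e2: "(n choose k) * (n - k) = Suc k * (n choose Suc k)" using e by (simp add: mult.commute)
        have d: "(of_nat (n choose k) * of_nat (n - k) :: complex) = of_nat (Suc k) * of_nat (n choose Suc k)"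
          by (simp only: of_nat_mult[symmetric] e2)
        have nz1: "(n choose Suc k) \<noteq> 0" using kn by simp
        show ?thesis unfolding c_def k d using nz1 of_nat_neq_0[of k, where 'a=complex] by (simp del: of_nat_Suc)
      qed
      finally show "(\<Sum>j\<in>B. w (B - {j}) * g B) = c B * g B" .
    qed
    finally show ?thesis .
  qed
  have P1: "{A. A \<subset> I} = Pow I - {I}" by auto
  have P2: "{B. B \<subseteq> I \<and> B \<noteq> {}} = Pow I - {{}}" by auto
  have cI: "c I = 1" "c {} = 1" using n by (simp_all add: c_def)
  have "(\<Sum>A\<in>{A. A \<subset> I}. w A * (\<Sum>j\<in>I - A. g A - g (insert j A))) =
      (\<Sum>A\<in>{A. A \<subset> I}. w A * (\<Sum>j\<in>I - A. g A)) - (\<Sum>A\<in>{A. A \<subset> I}. w A * (\<Sum>j\<in>I - A. g (insert j A)))"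
    by (simp add: sum_subtractf right_diff_distrib sum.distrib[symmetric])
  also have "\<dots> = g {} - g I"
    unfolding part1 part2 unfolding P1 P2 using fin cI
    by (simp add: sum_diff1)
  finally show ?thesis unfolding w_def .
qed




lemma L2_mult:
  fixes p q :: "'x \<Rightarrow> complex"
  assumes [measurable]: "p \<in> borel_measurable M" "q \<in> borel_measurable M"
    and "integrable M (\<lambda>x. (cmod (p x))^2)" "integrable M (\<lambda>x. (cmod (q x))^2)"
  shows "integrable M (\<lambda>x. p x * q x)"
proof (rule Bochner_Integration.integrable_bound[OF Bochner_Integration.integrable_add[OF assms(3,4)]])
  show "(\<lambda>x. p x * q x) \<in> borel_measurable M" by measurable
  show "AE x in M. norm (p x * q x) \<le> norm ((cmod (p x))^2 + (cmod (q x))^2)"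
  proof (rule AE_I2)
    fix x
    have "0 \<le> (cmod (p x) - cmod (q x))^2" by simp
    then have a: "2 * (cmod (p x) * cmod (q x)) \<le> (cmod (p x))^2 + (cmod (q x))^2"
      unfolding power2_diff by simp
    have "0 \<le> cmod (p x) * cmod (q x)" by simp
    with a have "cmod (p x) * cmod (q x) \<le> (cmod (p x))^2 + (cmod (q x))^2" by linarith
    then show "norm (p x * q x) \<le> norm ((cmod (p x))^2 + (cmod (q x))^2)"
      by (simp add: norm_mult)
  qed
qed

lemma L2_diff:
  fixes p q :: "'x \<Rightarrow> complex"
  assumes [measurable]: "p \<in> borel_measurable M" "q \<in> borel_measurable M"
    and "integrable M (\<lambda>x. (cmod (p x))^2)" "integrable M (\<lambda>x. (cmod (q x))^2)"
  shows "integrable M (\<lambda>x. (cmod (p x - q x))^2)"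
proof (rule Bochner_Integration.integrable_bound[OF Bochner_Integration.integrable_add[OF integrable_mult_right[OF assms(3)] integrable_mult_right[OF assms(4)]]])
  show "(\<lambda>x. (cmod (p x - q x))^2) \<in> borel_measurable M" by measurable
  show "AE x in M. norm ((cmod (p x - q x))^2) \<le> norm (2 * (cmod (p x))^2 + 2 * (cmod (q x))^2)"
  proof (rule AE_I2)
    fix x
    have t: "cmod (p x - q x) \<le> cmod (p x) + cmod (q x)" by (rule norm_triangle_ineq4)
    have "0 \<le> (cmod (p x) - cmod (q x))^2" by simp
    then have a: "2 * (cmod (p x) * cmod (q x)) \<le> (cmod (p x))^2 + (cmod (q x))^2"
      unfolding power2_diff by simp
    have "(cmod (p x - q x))^2 \<le> (cmod (p x) + cmod (q x))^2"
      by (rule power_mono[OF t]) simp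
    also have "\<dots> = (cmod (p x))^2 + (cmod (q x))^2 + 2 * (cmod (p x) * cmod (q x))"
      unfolding power2_sum by simp
    also have "\<dots> \<le> 2 * (cmod (p x))^2 + 2 * (cmod (q x))^2" using a by linarith
    finally have "(cmod (p x - q x))^2 \<le> 2 * (cmod (p x))^2 + 2 * (cmod (q x))^2" .
    then show "norm ((cmod (p x - q x))^2) \<le> norm (2 * (cmod (p x))^2 + 2 * (cmod (q x))^2)"
      by simp
  qed
qed

lemma L2_L1:
  fixes p :: "'x \<Rightarrow> complex"
  assumes "prob_space M" and [measurable]: "p \<in> borel_measurable M"
    and "integrable M (\<lambda>x. (cmod (p x))^2)"
  shows "integrable M p"
proof -
  have fm: "finite_measure M" using assms(1) by (simp add: prob_space.finite_measure)
  show ?thesis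
proof (rule Bochner_Integration.integrable_bound[OF Bochner_Integration.integrable_add[OF finite_measure.integrable_const[OF fm] assms(3)]])
  show "p \<in> borel_measurable M" by measurable
  show "AE x in M. norm (p x) \<le> norm ((1::real) + (cmod (p x))^2)"
  proof (rule AE_I2)
    fix x
    have "cmod (p x) \<le> 1 + (cmod (p x))^2"
    proof (cases "cmod (p x) \<le> 1")
      case True then show ?thesis by (simp add: add_increasing2)
    next
      case False
      then have "cmod (p x) * 1 \<le> cmod (p x) * cmod (p x)" by (intro mult_left_mono) auto
      then show ?thesis by (simp add: power2_eq_square)
    qed
    then show "norm (p x) \<le> norm ((1::real) + (cmod (p x))^2)" by simp
  qed
qed
qed


lemma int_sum2:
  fixes X :: "nat set \<Rightarrow> nat \<Rightarrow> 'x \<Rightarrow> complex" and wt :: "nat set \<Rightarrow> complex"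
  assumes fP: "finite P" and fJ: "\<And>A. A \<in> P \<Longrightarrow> finite (J A)"
    and i: "\<And>A j. A \<in> P \<Longrightarrow> j \<in> J A \<Longrightarrow> integrable M (X A j)"
  shows "integrable M (\<lambda>w. \<Sum>A\<in>P. wt A * (\<Sum>j\<in>J A. X A j w))"
    and "(\<integral>w. (\<Sum>A\<in>P. wt A * (\<Sum>j\<in>J A. X A j w)) \<partial>M) = (\<Sum>A\<in>P. wt A * (\<Sum>j\<in>J A. \<integral>w. X A j w \<partial>M))"
proof -
  have ii: "integrable M (\<lambda>w. wt A * (\<Sum>j\<in>J A. X A j w))" if "A \<in> P" for A
    using i that by (intro Bochner_Integration.integrable_mult_right Bochner_Integration.integrable_sum) auto
  show "integrable M (\<lambda>w. \<Sum>A\<in>P. wt A * (\<Sum>j\<in>J A. X A j w))"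
    using ii by (intro Bochner_Integration.integrable_sum) auto
  have "(\<integral>w. (\<Sum>A\<in>P. wt A * (\<Sum>j\<in>J A. X A j w)) \<partial>M) = (\<Sum>A\<in>P. \<integral>w. wt A * (\<Sum>j\<in>J A. X A j w) \<partial>M)"
    using ii by (rule Bochner_Integration.integral_sum)
  also have "\<dots> = (\<Sum>A\<in>P. wt A * (\<Sum>j\<in>J A. \<integral>w. X A j w \<partial>M))"
  proof (rule sum.cong[OF refl])
    fix A assume A: "A \<in> P"
    have "(\<integral>w. wt A * (\<Sum>j\<in>J A. X A j w) \<partial>M) = wt A * (\<integral>w. (\<Sum>j\<in>J A. X A j w) \<partial>M)"
      by (rule integral_mult_right_zero)
    also have "(\<integral>w. (\<Sum>j\<in>J A. X A j w) \<partial>M) = (\<Sum>j\<in>J A. \<integral>w. X A j w \<partial>M)"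
      using i A by (intro Bochner_Integration.integral_sum) auto
    finally show "(\<integral>w. wt A * (\<Sum>j\<in>J A. X A j w) \<partial>M) = wt A * (\<Sum>j\<in>J A. \<integral>w. X A j w \<partial>M)" .
  qed
  finally show "(\<integral>w. (\<Sum>A\<in>P. wt A * (\<Sum>j\<in>J A. X A j w)) \<partial>M) = (\<Sum>A\<in>P. wt A * (\<Sum>j\<in>J A. \<integral>w. X A j w \<partial>M))" .
qed

lemma sum_half:
  fixes T :: "nat set \<Rightarrow> nat \<Rightarrow> complex"
  shows "(\<Sum>A\<in>P. c A * (\<Sum>j\<in>J A. 1/2 * T A j)) = 1/2 * (\<Sum>A\<in>P. c A * (\<Sum>j\<in>J A. T A j))"
  by (simp add: sum_distrib_left mult_ac)

context covctx
begin

lemma int_swp: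
  fixes G :: "_ \<Rightarrow> 'c::{banach, second_countable_topology}"
  assumes "G \<in> borel_measurable Om" "S \<subseteq> I" "T \<subseteq> I"
  shows "(\<integral>w. G (swp S T w) \<partial>Om) = (\<integral>w. G w \<partial>Om)"
  using integral_distr[OF meas_swp[OF assms(2,3)] assms(1)] swp_inv[OF assms(2,3)] by simp

lemma integrable_swp:
  fixes G :: "_ \<Rightarrow> 'c::{banach, second_countable_topology}"
  assumes "G \<in> borel_measurable Om" "S \<subseteq> I" "T \<subseteq> I" "integrable Om G"
  shows "integrable Om (\<lambda>w. G (swp S T w))"
  using integrable_distr_eq[OF meas_swp[OF assms(2,3)] assms(1)] swp_inv[OF assms(2,3)] assms(4) by simp

lemma meas_comp_cfg:
  "g \<in> borel_measurable PQ \<Longrightarrow> S \<subseteq> I \<Longrightarrow> T \<subseteq> I \<Longrightarrow> (\<lambda>w. g (cfg S T w)) \<in> borel_measurable Om"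
  by (rule measurable_compose[OF meas_cfg])

lemma meas_fst: "g \<in> borel_measurable PQ \<Longrightarrow> (\<lambda>w. g (fst w)) \<in> borel_measurable Om"
  unfolding Om_def by (rule measurable_compose[OF measurable_fst])

lemma sq_cfg:
  fixes g :: "_ \<Rightarrow> complex"
  assumes g: "g \<in> borel_measurable PQ" and sq: "integrable Om (\<lambda>w. (cmod (g (fst w)))^2)"
    and ST: "S \<subseteq> I" "T \<subseteq> I"
  shows "integrable Om (\<lambda>w. (cmod (g (cfg S T w)))^2)"
proof -
  have m: "(\<lambda>w. (cmod (g (fst w)))^2) \<in> borel_measurable Om" using meas_fst[OF g] by measurable
  from integrable_swp[OF m ST sq] show ?thesis by (simp add: fst_swp)
qed

lemma cfg_empty: "cfg {} {} w = fst w" by (simp add: cfg_def repl_def)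

lemma cfg_I: 
  assumes "w \<in> space Om"
  shows "cfg I T w = (fst (snd w), repl T (snd (fst w)) (snd (snd w)))"
proof -
  obtain t a t' a' where w: "w = ((t, a), (t', a'))" by (metis prod.collapse)
  have "t \<in> extensional I" "t' \<in> extensional I" using assms by (auto simp: w spOm PiE_def)
  then have "repl I t t' = t'" by (auto simp: repl_def extensional_def fun_eq_iff)
  then show ?thesis by (simp add: w cfg_def)
qed

lemma cfg_II: "w \<in> space Om \<Longrightarrow> cfg I I w = snd w"
proof -
  assume w: "w \<in> space Om"
  obtain t a t' a' where ww: "w = ((t, a), (t', a'))" by (metis prod.collapse)
  have "a \<in> extensional I" "a' \<in> extensional I" using w by (auto simp: ww spOm PiE_def)
  then have "repl I a a' = a'" by (auto simp: repl_def extensional_def fun_eq_iff)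
  then show ?thesis using cfg_I[OF w, of I] by (simp add: ww)
qed

lemma half:
  fixes p p' q :: "_ \<Rightarrow> complex"
  assumes UV: "U \<subseteq> I" "V \<subseteq> I" and m[measurable]: "p \<in> borel_measurable Om" "p' \<in> borel_measurable Om" "q \<in> borel_measurable Om"
    and i1: "integrable Om (\<lambda>w. p w * q w)" and i2: "integrable Om (\<lambda>w. p' w * q w)"
    and s1: "\<And>w. p (swp U V w) = p' w" and s2: "\<And>w. q (swp U V w) = - q w"
  shows "(\<integral>w. p w * q w \<partial>Om) = 1/2 * (\<integral>w. (p w - p' w) * q w \<partial>Om)"
proof -
  have mm: "(\<lambda>w. p w * q w) \<in> borel_measurable Om" by measurable
  have "(\<integral>w. p w * q w \<partial>Om) = (\<integral>w. p (swp U V w) * q (swp U V w) \<partial>Om)"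
    using int_swp[OF mm UV] by simp
  also have "\<dots> = (\<integral>w. - (p' w * q w) \<partial>Om)" by (simp add: s1 s2)
  also have "\<dots> = - (\<integral>w. p' w * q w \<partial>Om)" by (rule integral_minus)
  finally have e: "(\<integral>w. p w * q w \<partial>Om) = - (\<integral>w. p' w * q w \<partial>Om)" .
  have "(\<integral>w. (p w - p' w) * q w \<partial>Om) = (\<integral>w. p w * q w - p' w * q w \<partial>Om)"
    by (simp add: left_diff_distrib)
  also have "\<dots> = (\<integral>w. p w * q w \<partial>Om) - (\<integral>w. p' w * q w \<partial>Om)" by (rule Bochner_Integration.integral_diff[OF i1 i2])
  finally show ?thesis using e by simp
qed

lemma indep:
  fixes h f :: "_ \<Rightarrow> complex"
  assumes hm: "h \<in> borel_measurable PQ" and fm: "f \<in> borel_measurable PQ"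
    and h2: "integrable Om (\<lambda>w. (cmod (h (fst w)))^2)" and f2: "integrable Om (\<lambda>w. (cmod (f (fst w)))^2)"
  shows "(\<integral>w. h (fst w) * f (snd w) \<partial>Om) = (\<integral>w. h (fst w) \<partial>Om) * (\<integral>w. f (fst w) \<partial>Om)"
proof -
  interpret pp: pair_sigma_finite PQ PQ by (intro pair_sigma_finite.intro sfPQ)
  have f2': "integrable Om (\<lambda>w. (cmod (f (snd w)))^2)"
    using sq_cfg[OF fm f2, of I I]
    by (subst Bochner_Integration.integrable_cong[OF refl, where g="\<lambda>w. (cmod (f (cfg I I w)))^2"])
       (simp_all add: cfg_II)
  have msnd: "(\<lambda>w. f (snd w)) \<in> borel_measurable Om"
    unfolding Om_def by (rule measurable_compose[OF measurable_snd fm])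
  have int: "integrable Om (\<lambda>w. h (fst w) * f (snd w))"
    by (rule L2_mult[OF meas_fst[OF hm] msnd h2 f2'])
  have c1: "measure PQ (space PQ) = 1"
    using prob_space.prob_space[OF probPQ] by simp
  have "(\<integral>w. h (fst w) * f (snd w) \<partial>Om) = (\<integral>x. (\<integral>y. h x * f y \<partial>PQ) \<partial>PQ)"
    using pp.integral_fst'[OF int[unfolded Om_def]] by (simp add: Om_def)
  also have "\<dots> = (\<integral>x. h x \<partial>PQ) * (\<integral>y. f y \<partial>PQ)" by simp
  also have "(\<integral>x. h x \<partial>PQ) = (\<integral>w. h (fst w) \<partial>Om)"
  proof -
    have ih: "integrable Om (\<lambda>w. h (fst w))" by (rule L2_L1[OF probOm meas_fst[OF hm] h2])
    show ?thesis using pp.integral_fst'[OF ih[unfolded Om_def]] by (simp add: Om_def c1)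
  qed
  also have "(\<integral>x. f x \<partial>PQ) = (\<integral>w. f (fst w) \<partial>Om)"
  proof -
    have ih: "integrable Om (\<lambda>w. f (fst w))" by (rule L2_L1[OF probOm meas_fst[OF fm] f2])
    show ?thesis using pp.integral_fst'[OF ih[unfolded Om_def]] by (simp add: Om_def c1)
  qed
  finally show ?thesis .
qed


lemma core:
  fixes h f :: "((nat \<Rightarrow> 'a) \<times> (nat \<Rightarrow> 'b)) \<Rightarrow> complex" and n :: nat
  assumes hm: "h \<in> borel_measurable PQ" and fm: "f \<in> borel_measurable PQ"
    and h2: "integrable Om (\<lambda>w. (cmod (h (fst w)))^2)" and f2: "integrable Om (\<lambda>w. (cmod (f (fst w)))^2)"
    and n: "card I = n"
  shows "(\<integral>w. h (fst w) * f (fst w) \<partial>Om) - (\<integral>w. h (fst w) \<partial>Om) * (\<integral>w. f (fst w) \<partial>Om) =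
     1/2 * ((\<Sum>A\<in>{A. A \<subset> I}. 1 / (of_nat (n choose card A) * of_nat (n - card A)) *
          (\<Sum>j\<in>I - A. \<integral>w. (h (cfg {} {} w) - h (cfg {j} {} w)) * (f (cfg A {} w) - f (cfg (insert j A) {} w)) \<partial>Om))
       + (\<Sum>A\<in>{A. A \<subset> I}. 1 / (of_nat (n choose card A) * of_nat (n - card A)) *
          (\<Sum>j\<in>I - A. \<integral>w. (h (cfg {} {} w) - h (cfg {} {j} w)) * (f (cfg I A w) - f (cfg I (insert j A) w)) \<partial>Om)))"
    (is "?L = 1/2 * (?R1 + ?R2)")
proof -
  define wt where "wt A = 1 / (of_nat (n choose card A) * of_nat (n - card A) :: complex)" for A :: "nat set"
  let ?P = "{A. A \<subset> I}"
  have finP: "finite ?P" by (rule finite_subset[of _ "Pow I"]) (auto simp: fin)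
  have finJ: "finite (I - A)" for A using fin by simp
  have hc: "(\<lambda>w. h (cfg S T w)) \<in> borel_measurable Om" if "S \<subseteq> I" "T \<subseteq> I" for S T
    using meas_comp_cfg[OF hm that] .
  have fc: "(\<lambda>w. f (cfg S T w)) \<in> borel_measurable Om" if "S \<subseteq> I" "T \<subseteq> I" for S T
    using meas_comp_cfg[OF fm that] .
  have hq: "integrable Om (\<lambda>w. (cmod (h (cfg S T w)))^2)" if "S \<subseteq> I" "T \<subseteq> I" for S T
    using sq_cfg[OF hm h2 that] .
  have fq: "integrable Om (\<lambda>w. (cmod (f (cfg S T w)))^2)" if "S \<subseteq> I" "T \<subseteq> I" for S T
    using sq_cfg[OF fm f2 that] .
  have fdm: "(\<lambda>w. f (cfg S1 T1 w) - f (cfg S2 T2 w)) \<in> borel_measurable Om"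
    if "S1 \<subseteq> I" "T1 \<subseteq> I" "S2 \<subseteq> I" "T2 \<subseteq> I" for S1 T1 S2 T2
    using fc[OF that(1,2)] fc[OF that(3,4)] by measurable
  have fdq: "integrable Om (\<lambda>w. (cmod (f (cfg S1 T1 w) - f (cfg S2 T2 w)))^2)"
    if "S1 \<subseteq> I" "T1 \<subseteq> I" "S2 \<subseteq> I" "T2 \<subseteq> I" for S1 T1 S2 T2
    by (rule L2_diff[OF fc[OF that(1,2)] fc[OF that(3,4)] fq[OF that(1,2)] fq[OF that(3,4)]])
  have iprod: "integrable Om (\<lambda>w. h (cfg S T w) * (f (cfg S1 T1 w) - f (cfg S2 T2 w)))"
    if "S \<subseteq> I" "T \<subseteq> I" "S1 \<subseteq> I" "T1 \<subseteq> I" "S2 \<subseteq> I" "T2 \<subseteq> I" for S T S1 T1 S2 T2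
    by (rule L2_mult[OF hc[OF that(1,2)] fdm[OF that(3-6)] hq[OF that(1,2)] fdq[OF that(3-6)]])
  have e1: "?L = (\<integral>w. h (cfg {} {} w) * (f (cfg {} {} w) - f (cfg I I w)) \<partial>Om)"
  proof -
    have "(\<integral>w. h (fst w) \<partial>Om) * (\<integral>w. f (fst w) \<partial>Om) = (\<integral>w. h (fst w) * f (snd w) \<partial>Om)"
      using indep[OF hm fm h2 f2] by simp
    also have "\<dots> = (\<integral>w. h (cfg {} {} w) * f (cfg I I w) \<partial>Om)"
      by (rule Bochner_Integration.integral_cong) (simp_all add: cfg_empty cfg_II)
    finally have a: "(\<integral>w. h (fst w) \<partial>Om) * (\<integral>w. f (fst w) \<partial>Om) = (\<integral>w. h (cfg {} {} w) * f (cfg I I w) \<partial>Om)" .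
    have i1: "integrable Om (\<lambda>w. h (cfg {} {} w) * f (cfg {} {} w))"
      by (rule L2_mult[OF hc fc hq fq]) auto
    have i2: "integrable Om (\<lambda>w. h (cfg {} {} w) * f (cfg I I w))"
      by (rule L2_mult[OF hc fc hq fq]) auto
    have "(\<integral>w. h (cfg {} {} w) * (f (cfg {} {} w) - f (cfg I I w)) \<partial>Om) =
        (\<integral>w. h (cfg {} {} w) * f (cfg {} {} w) - h (cfg {} {} w) * f (cfg I I w) \<partial>Om)"
      by (simp add: right_diff_distrib)
    also have "\<dots> = (\<integral>w. h (cfg {} {} w) * f (cfg {} {} w) \<partial>Om) - (\<integral>w. h (cfg {} {} w) * f (cfg I I w) \<partial>Om)"
      by (rule Bochner_Integration.integral_diff[OF i1 i2])
    finally show ?thesis using a by (simp add: cfg_empty)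
  qed
  define X1 where "X1 A j w = h (cfg {} {} w) * (f (cfg A {} w) - f (cfg (insert j A) {} w))" for A j w
  define X2 where "X2 A j w = h (cfg {} {} w) * (f (cfg I A w) - f (cfg I (insert j A) w))" for A j w
  have pw: "h (cfg {} {} w) * (f (cfg {} {} w) - f (cfg I I w)) =
     (\<Sum>A\<in>?P. wt A * (\<Sum>j\<in>I - A. X1 A j w)) + (\<Sum>A\<in>?P. wt A * (\<Sum>j\<in>I - A. X2 A j w))" for w
  proof -
    have t1: "(\<Sum>A\<in>?P. wt A * (\<Sum>j\<in>I - A. X1 A j w)) = h (cfg {} {} w) * f (cfg {} {} w) - h (cfg {} {} w) * f (cfg I {} w)"
      using telescope[OF fin n, of "\<lambda>A. h (cfg {} {} w) * f (cfg A {} w)"]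
      unfolding X1_def wt_def right_diff_distrib .
    have t2: "(\<Sum>A\<in>?P. wt A * (\<Sum>j\<in>I - A. X2 A j w)) = h (cfg {} {} w) * f (cfg I {} w) - h (cfg {} {} w) * f (cfg I I w)"
      using telescope[OF fin n, of "\<lambda>A. h (cfg {} {} w) * f (cfg I A w)"]
      unfolding X2_def wt_def right_diff_distrib .
    show ?thesis unfolding t1 t2 by (simp add: right_diff_distrib)
  qed
  have subs: "A \<subseteq> I" "insert j A \<subseteq> I" "{j} \<subseteq> I" if "A \<in> ?P" "j \<in> I - A" for A j
    using that by auto
  have iX1: "integrable Om (X1 A j)" if "A \<in> ?P" "j \<in> I - A" for A j
    unfolding X1_def using iprod subs[OF that] by simp
  have iX2: "integrable Om (X2 A j)" if "A \<in> ?P" "j \<in> I - A" for A j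
    unfolding X2_def using iprod subs[OF that] by simp
  have e3: "(\<integral>w. h (cfg {} {} w) * (f (cfg {} {} w) - f (cfg I I w)) \<partial>Om) =
     (\<Sum>A\<in>?P. wt A * (\<Sum>j\<in>I - A. \<integral>w. X1 A j w \<partial>Om)) + (\<Sum>A\<in>?P. wt A * (\<Sum>j\<in>I - A. \<integral>w. X2 A j w \<partial>Om))"
  proof -
    note a1 = int_sum2(2)[where wt=wt, OF finP finJ iX1]
    note a2 = int_sum2(2)[where wt=wt, OF finP finJ iX2]
    have "(\<integral>w. h (cfg {} {} w) * (f (cfg {} {} w) - f (cfg I I w)) \<partial>Om) =
       (\<integral>w. (\<Sum>A\<in>?P. wt A * (\<Sum>j\<in>I - A. X1 A j w)) + (\<Sum>A\<in>?P. wt A * (\<Sum>j\<in>I - A. X2 A j w)) \<partial>Om)"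
      unfolding pw ..
    also have "\<dots> = (\<integral>w. (\<Sum>A\<in>?P. wt A * (\<Sum>j\<in>I - A. X1 A j w)) \<partial>Om) + (\<integral>w. (\<Sum>A\<in>?P. wt A * (\<Sum>j\<in>I - A. X2 A j w)) \<partial>Om)"
      by (rule Bochner_Integration.integral_add[OF int_sum2(1)[OF finP finJ iX1] int_sum2(1)[OF finP finJ iX2]])
    also have "\<dots> = (\<Sum>A\<in>?P. wt A * (\<Sum>j\<in>I - A. \<integral>w. X1 A j w \<partial>Om)) + (\<Sum>A\<in>?P. wt A * (\<Sum>j\<in>I - A. \<integral>w. X2 A j w \<partial>Om))"
      by (rule arg_cong2[where f="(+)", OF a1 a2])
    finally show ?thesis .
  qed
  have h1: "(\<integral>w. X1 A j w \<partial>Om) = 1/2 * (\<integral>w. (h (cfg {} {} w) - h (cfg {j} {} w)) * (f (cfg A {} w) - f (cfg (insert j A) {} w)) \<partial>Om)"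
    if "A \<in> ?P" "j \<in> I - A" for A j
  proof -
    have jA: "j \<notin> A" using that by simp
    show ?thesis unfolding X1_def
    proof (rule half[where U="{j}" and V="{}"])
      show "{j} \<subseteq> I" "{} \<subseteq> I" using subs[OF that] by auto
      show "(\<lambda>w. h (cfg {} {} w)) \<in> borel_measurable Om" "(\<lambda>w. h (cfg {j} {} w)) \<in> borel_measurable Om"
        using hc subs[OF that] by auto
      show "(\<lambda>w. f (cfg A {} w) - f (cfg (insert j A) {} w)) \<in> borel_measurable Om"
        using fdm subs[OF that] by auto
      show "integrable Om (\<lambda>w. h (cfg {} {} w) * (f (cfg A {} w) - f (cfg (insert j A) {} w)))"
        "integrable Om (\<lambda>w. h (cfg {j} {} w) * (f (cfg A {} w) - f (cfg (insert j A) {} w)))"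
        using iprod subs[OF that] by auto
      show "h (cfg {} {} (swp {j} {} w)) = h (cfg {j} {} w)" for w
        by (simp add: cfg_swp sd_def)
      have "sd A {j} = insert j A" "sd (insert j A) {j} = A" using jA by (auto simp: sd_def)
      then show "f (cfg A {} (swp {j} {} w)) - f (cfg (insert j A) {} (swp {j} {} w)) =
          - (f (cfg A {} w) - f (cfg (insert j A) {} w))" for w
        by (simp add: cfg_swp sd_def)
    qed
  qed
  have h2': "(\<integral>w. X2 A j w \<partial>Om) = 1/2 * (\<integral>w. (h (cfg {} {} w) - h (cfg {} {j} w)) * (f (cfg I A w) - f (cfg I (insert j A) w)) \<partial>Om)"
    if "A \<in> ?P" "j \<in> I - A" for A j
  proof -
    have jA: "j \<notin> A" using that by simp
    show ?thesis unfolding X2_def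
    proof (rule half[where U="{}" and V="{j}"])
      show "{j} \<subseteq> I" "{} \<subseteq> I" using subs[OF that] by auto
      show "(\<lambda>w. h (cfg {} {} w)) \<in> borel_measurable Om" "(\<lambda>w. h (cfg {} {j} w)) \<in> borel_measurable Om"
        using hc subs[OF that] by auto
      show "(\<lambda>w. f (cfg I A w) - f (cfg I (insert j A) w)) \<in> borel_measurable Om"
        using fdm subs[OF that] by auto
      show "integrable Om (\<lambda>w. h (cfg {} {} w) * (f (cfg I A w) - f (cfg I (insert j A) w)))"
        "integrable Om (\<lambda>w. h (cfg {} {j} w) * (f (cfg I A w) - f (cfg I (insert j A) w)))"
        using iprod subs[OF that] by auto
      show "h (cfg {} {} (swp {} {j} w)) = h (cfg {} {j} w)" for w
        by (simp add: cfg_swp sd_def)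
      have "sd A {j} = insert j A" "sd (insert j A) {j} = A" "sd I {} = I" using jA by (auto simp: sd_def)
      then show "f (cfg I A (swp {} {j} w)) - f (cfg I (insert j A) (swp {} {j} w)) =
          - (f (cfg I A w) - f (cfg I (insert j A) w))" for w
        by (simp add: cfg_swp)
    qed
  qed
  have s1: "(\<Sum>A\<in>?P. wt A * (\<Sum>j\<in>I - A. \<integral>w. X1 A j w \<partial>Om)) =
      (\<Sum>A\<in>?P. wt A * (\<Sum>j\<in>I - A. 1/2 * (\<integral>w. (h (cfg {} {} w) - h (cfg {j} {} w)) * (f (cfg A {} w) - f (cfg (insert j A) {} w)) \<partial>Om)))"
    by (intro sum.cong refl arg_cong2[where f="(*)"] h1) auto
  have s2: "(\<Sum>A\<in>?P. wt A * (\<Sum>j\<in>I - A. \<integral>w. X2 A j w \<partial>Om)) =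
      (\<Sum>A\<in>?P. wt A * (\<Sum>j\<in>I - A. 1/2 * (\<integral>w. (h (cfg {} {} w) - h (cfg {} {j} w)) * (f (cfg I A w) - f (cfg I (insert j A) w)) \<partial>Om)))"
    by (intro sum.cong refl arg_cong2[where f="(*)"] h2') auto
  show ?thesis
    unfolding e1 e3 unfolding s1 s2 unfolding sum_half wt_def by (simp add: distrib_left)
qed

end


theorem lemma4p1:
  fixes M :: "'w measure" and \<xi> :: real and n :: nat
    and \<nu>0 :: "((real^3) \<times> real) measure" and \<nu>1 :: "complex measure"
    and Xt Xt' :: "'w \<Rightarrow> nat \<Rightarrow> (real^3) \<times> real"
    and Xa Xa' :: "'w \<Rightarrow> nat \<Rightarrow> complex"
    and h f :: "(nat \<Rightarrow> (real^3) \<times> real) \<times> (nat \<Rightarrow> complex) \<Rightarrow> complex"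
  assumes "0 < \<xi>" "\<xi> < 1/2" "n \<ge> 1"
    and "prob_space M"
    and "prob_space \<nu>0" "sets \<nu>0 = sets borel" "emeasure \<nu>0 (S0 \<xi>) = 1"
    and "prob_space \<nu>1" "sets \<nu>1 = sets borel" "emeasure \<nu>1 Cplus = 1"
    and "(\<lambda>\<omega>. ((Xt \<omega>, Xa \<omega>), (Xt' \<omega>, Xa' \<omega>))) \<in> measurable M (SnM n \<Otimes>\<^sub>M SnM n)"
    and "distr M (SnM n \<Otimes>\<^sub>M SnM n) (\<lambda>\<omega>. ((Xt \<omega>, Xa \<omega>), (Xt' \<omega>, Xa' \<omega>))) =
           (PiM {1..n} (\<lambda>_. \<nu>0) \<Otimes>\<^sub>M PiM {1..n} (\<lambda>_. \<nu>1)) \<Otimes>\<^sub>M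
           (PiM {1..n} (\<lambda>_. \<nu>0) \<Otimes>\<^sub>M PiM {1..n} (\<lambda>_. \<nu>1))"
    and "h \<in> borel_measurable (SnM n)" "f \<in> borel_measurable (SnM n)"
    and "integrable M (\<lambda>\<omega>. (cmod (h (Xt \<omega>, Xa \<omega>)))^2)"
    and "integrable M (\<lambda>\<omega>. (cmod (f (Xt \<omega>, Xa \<omega>)))^2)"
  shows "(\<integral>\<omega>. h (Xt \<omega>, Xa \<omega>) * f (Xt \<omega>, Xa \<omega>) \<partial>M)
           - (\<integral>\<omega>. h (Xt \<omega>, Xa \<omega>) \<partial>M) * (\<integral>\<omega>. f (Xt \<omega>, Xa \<omega>) \<partial>M)
       = 1/2 * (
          (\<Sum>A\<in>{A. A \<subset> {1..n}}. 1 / (of_nat (n choose card A) * of_nat (n - card A)) *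
             (\<Sum>j\<in>{1..n} - A.
                \<integral>\<omega>. (h (Xt \<omega>, Xa \<omega>) - h (repl {j} (Xt \<omega>) (Xt' \<omega>), Xa \<omega>)) *
                    (f (repl A (Xt \<omega>) (Xt' \<omega>), Xa \<omega>) - f (repl (insert j A) (Xt \<omega>) (Xt' \<omega>), Xa \<omega>)) \<partial>M))
        + (\<Sum>A\<in>{A. A \<subset> {1..n}}. 1 / (of_nat (n choose card A) * of_nat (n - card A)) *
             (\<Sum>j\<in>{1..n} - A.
                \<integral>\<omega>. (h (Xt \<omega>, Xa \<omega>) - h (Xt \<omega>, repl {j} (Xa \<omega>) (Xa' \<omega>))) *
                    (f (Xt' \<omega>, repl A (Xa \<omega>) (Xa' \<omega>)) - f (Xt' \<omega>, repl (insert j A) (Xa \<omega>) (Xa' \<omega>))) \<partial>M)))"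
proof -
  let ?I = "{1..n}"
  interpret covctx \<nu>0 \<nu>1 ?I
    by (rule covctx.intro) (simp_all add: assms)
  let ?Psi = "\<lambda>\<omega>. ((Xt \<omega>, Xa \<omega>), (Xt' \<omega>, Xa' \<omega>))"
  have sP: "sets (PiM ?I (\<lambda>_. borel)) = sets P" unfolding P_def
    by (rule sets_PiM_cong) (simp_all add: assms)
  have sQ: "sets (PiM ?I (\<lambda>_. borel)) = sets Q" unfolding Q_def
    by (rule sets_PiM_cong) (simp_all add: assms)
  have sSn: "sets (SnM n) = sets PQ" unfolding SnM_def PQ_def
    by (rule sets_pair_measure_cong[OF sP sQ])
  have sets_eq: "sets (SnM n \<Otimes>\<^sub>M SnM n) = sets Om" unfolding Om_def
    by (rule sets_pair_measure_cong[OF sSn sSn])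
  have Psim: "?Psi \<in> measurable M Om"
  proof -
    have eq: "measurable M (SnM n \<Otimes>\<^sub>M SnM n) = measurable M Om"
      by (rule measurable_cong_sets[OF refl sets_eq])
    from assms(11) show ?thesis unfolding eq .
  qed
  have distrOm: "distr M Om ?Psi = Om"
  proof -
    have "distr M Om ?Psi = distr M (SnM n \<Otimes>\<^sub>M SnM n) ?Psi"
      by (rule distr_cong) (simp_all add: sets_eq)
    also have "\<dots> = Om" unfolding Om_def PQ_def P_def Q_def by (rule assms(12))
    finally show ?thesis .
  qed
  have tr: "(\<integral>\<omega>. G (?Psi \<omega>) \<partial>M) = (\<integral>w. G w \<partial>Om)" if "G \<in> borel_measurable Om" for G :: "_ \<Rightarrow> complex"
    using integral_distr[OF Psim that] distrOm by simp
  have eqb: "borel_measurable (SnM n) = borel_measurable PQ"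
    by (rule measurable_cong_sets[OF sSn refl])
  have hm: "h \<in> borel_measurable PQ" using assms(13) unfolding eqb .
  have fm: "f \<in> borel_measurable PQ" using assms(14) unfolding eqb .
  have h2: "integrable Om (\<lambda>w. (cmod (h (fst w)))^2)"
  proof -
    have m: "(\<lambda>w. (cmod (h (fst w)))^2) \<in> borel_measurable Om" using meas_fst[OF hm] by measurable
    show ?thesis using integrable_distr_eq[OF Psim m] distrOm assms(15) by simp
  qed
  have f2: "integrable Om (\<lambda>w. (cmod (f (fst w)))^2)"
  proof -
    have m: "(\<lambda>w. (cmod (f (fst w)))^2) \<in> borel_measurable Om" using meas_fst[OF fm] by measurable
    show ?thesis using integrable_distr_eq[OF Psim m] distrOm assms(16) by simp
  qed
  have cardI: "card ?I = n" by simp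
  note C = core[OF hm fm h2 f2 cardI]
  have L1: "(\<integral>\<omega>. h (Xt \<omega>, Xa \<omega>) * f (Xt \<omega>, Xa \<omega>) \<partial>M) = (\<integral>w. h (fst w) * f (fst w) \<partial>Om)"
    using tr[of "\<lambda>w. h (fst w) * f (fst w)"] meas_fst[OF hm] meas_fst[OF fm] by simp
  have L2: "(\<integral>\<omega>. h (Xt \<omega>, Xa \<omega>) \<partial>M) = (\<integral>w. h (fst w) \<partial>Om)"
    using tr[of "\<lambda>w. h (fst w)"] meas_fst[OF hm] by simp
  have L3: "(\<integral>\<omega>. f (Xt \<omega>, Xa \<omega>) \<partial>M) = (\<integral>w. f (fst w) \<partial>Om)"
    using tr[of "\<lambda>w. f (fst w)"] meas_fst[OF fm] by simp
  have R1: "(\<integral>\<omega>. (h (Xt \<omega>, Xa \<omega>) - h (repl {j} (Xt \<omega>) (Xt' \<omega>), Xa \<omega>)) *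
                    (f (repl A (Xt \<omega>) (Xt' \<omega>), Xa \<omega>) - f (repl (insert j A) (Xt \<omega>) (Xt' \<omega>), Xa \<omega>)) \<partial>M)
    = (\<integral>w. (h (cfg {} {} w) - h (cfg {j} {} w)) * (f (cfg A {} w) - f (cfg (insert j A) {} w)) \<partial>Om)"
    if "A \<in> {A. A \<subset> ?I}" "j \<in> ?I - A" for A j
  proof -
    have s: "A \<subseteq> ?I" "insert j A \<subseteq> ?I" "{j} \<subseteq> ?I" using that by auto
    have m: "(\<lambda>w. (h (cfg {} {} w) - h (cfg {j} {} w)) * (f (cfg A {} w) - f (cfg (insert j A) {} w))) \<in> borel_measurable Om"
      using meas_comp_cfg[OF hm, of "{}" "{}"] meas_comp_cfg[OF hm s(3), of "{}"]
        meas_comp_cfg[OF fm s(1), of "{}"] meas_comp_cfg[OF fm s(2), of "{}"] by measurable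
    show ?thesis using tr[OF m] by (simp add: cfg_def repl_def)
  qed
  have R2: "(\<integral>\<omega>. (h (Xt \<omega>, Xa \<omega>) - h (Xt \<omega>, repl {j} (Xa \<omega>) (Xa' \<omega>))) *
                    (f (Xt' \<omega>, repl A (Xa \<omega>) (Xa' \<omega>)) - f (Xt' \<omega>, repl (insert j A) (Xa \<omega>) (Xa' \<omega>))) \<partial>M)
    = (\<integral>w. (h (cfg {} {} w) - h (cfg {} {j} w)) * (f (cfg ?I A w) - f (cfg ?I (insert j A) w)) \<partial>Om)"
    if "A \<in> {A. A \<subset> ?I}" "j \<in> ?I - A" for A j
  proof -
    have s: "A \<subseteq> ?I" "insert j A \<subseteq> ?I" "{j} \<subseteq> ?I" using that by auto
    have m: "(\<lambda>w. (h (cfg {} {} w) - h (cfg {} {j} w)) * (f (cfg ?I A w) - f (cfg ?I (insert j A) w))) \<in> borel_measurable Om"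
      using meas_comp_cfg[OF hm, of "{}" "{}"] meas_comp_cfg[OF hm _ s(3), of "{}"]
        meas_comp_cfg[OF fm _ s(1), of ?I] meas_comp_cfg[OF fm _ s(2), of ?I] by measurable
    have "(\<integral>\<omega>. (h (Xt \<omega>, Xa \<omega>) - h (Xt \<omega>, repl {j} (Xa \<omega>) (Xa' \<omega>))) *
                    (f (Xt' \<omega>, repl A (Xa \<omega>) (Xa' \<omega>)) - f (Xt' \<omega>, repl (insert j A) (Xa \<omega>) (Xa' \<omega>))) \<partial>M)
      = (\<integral>\<omega>. (h (cfg {} {} (?Psi \<omega>)) - h (cfg {} {j} (?Psi \<omega>))) * (f (cfg ?I A (?Psi \<omega>)) - f (cfg ?I (insert j A) (?Psi \<omega>))) \<partial>M)"
    proof (rule Bochner_Integration.integral_cong[OF refl])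
      fix \<omega> assume "\<omega> \<in> space M"
      then have sp: "?Psi \<omega> \<in> space Om" using measurable_space[OF Psim] by blast
      show "(h (Xt \<omega>, Xa \<omega>) - h (Xt \<omega>, repl {j} (Xa \<omega>) (Xa' \<omega>))) *
                    (f (Xt' \<omega>, repl A (Xa \<omega>) (Xa' \<omega>)) - f (Xt' \<omega>, repl (insert j A) (Xa \<omega>) (Xa' \<omega>)))
         = (h (cfg {} {} (?Psi \<omega>)) - h (cfg {} {j} (?Psi \<omega>))) * (f (cfg ?I A (?Psi \<omega>)) - f (cfg ?I (insert j A) (?Psi \<omega>)))"
        using cfg_I[OF sp, of A] cfg_I[OF sp, of "insert j A"] by (simp add: cfg_def repl_def)
    qed
    also have "\<dots> = (\<integral>w. (h (cfg {} {} w) - h (cfg {} {j} w)) * (f (cfg ?I A w) - f (cfg ?I (insert j A) w)) \<partial>Om)"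
      using tr[OF m] by simp
    finally show ?thesis .
  qed
  show ?thesis
    unfolding L1 L2 L3 C
    by (intro arg_cong2[where f="(*)"] refl arg_cong2[where f="(+)"] sum.cong arg_cong2[where f="(*)"])
       (simp_all add: R1 R2)
qed

end
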